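(* Let $Y$ be a well-tempered stratified set and $X$ any stratified set. Then every stratified map $h:X\circledast\Delta[1]_t\to Y$ factors through the projection $\pi_X:X\circledast\Delta[1]_t\to X$, i.e. there is a stratified map $\hat h:X\to Y$ with $h=\hat h\circ\pi_X$.
   Context: $[n]=\{0<\dots<n\}$; simplicial operators are order-preserving maps; $\sigma_k:[n+1]\to[n]$ is the degeneracy operator hitting $k$ twice. A stratified set is a simplicial set with a set of thin simplices containing every degenerate simplex and no $0$-simplex; stratified maps preserve thinness. $\Delta[1]_t$ is the standard $1$-simplex with all simplices of positive dimension thin. $X\circledast Y$ is the product: $n$-simplices are pairs $(x,y)$, operators act componentwise, thin iff both components thin; $\pi_X$ is the first projection. An $n$-simplex $x$ of a stratified set is pre-degenerate at $k$ ($0\le k<n$) if $x\cdot\alpha$ is thin for every operator $\alpha:[m]\to[n]$ whose image contains $k$ and $k+1$; $x$ is degenerate at $k$ if $x=x'\cdot\sigma_k$ for some simplex $x'$. A stratified set is well-tempered if every simplex pre-degenerate at $k$ is degenerate at $k$. *)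

theory Defs
  imports "HOL-Library.FuncSet"
begin

text \<open>Simplicial operators [m] -> [n]: order-preserving maps, represented
  extensionally as functions on {..m} (value undefined outside).\<close>

definition is_op :: "nat \<Rightarrow> nat \<Rightarrow> (nat \<Rightarrow> nat) \<Rightarrow> bool" where
  "is_op m n \<alpha> \<longleftrightarrow> \<alpha> \<in> {..m} \<rightarrow>\<^sub>E {..n} \<and> mono_on {..m} \<alpha>"

definition op_comp :: "nat \<Rightarrow> (nat \<Rightarrow> nat) \<Rightarrow> (nat \<Rightarrow> nat) \<Rightarrow> (nat \<Rightarrow> nat)" where
  "op_comp k \<alpha> \<beta> = restrict (\<alpha> \<circ> \<beta>) {..k}"

definition op_id :: "nat \<Rightarrow> (nat \<Rightarrow> nat)" where
  "op_id n = restrict id {..n}"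

definition sigma :: "nat \<Rightarrow> nat \<Rightarrow> (nat \<Rightarrow> nat)" where
  "sigma n k = restrict (\<lambda>i. if i \<le> k then i else i - 1) {..Suc n}"

text \<open>A stratified set: n-simplices, action  act n m \<alpha> x = x\<cdot>\<alpha>  for
  x an n-simplex and \<alpha> : [m] -> [n], and thin n-simplices.\<close>
record 'a sset =
  simp :: "nat \<Rightarrow> 'a set"
  act  :: "nat \<Rightarrow> nat \<Rightarrow> (nat \<Rightarrow> nat) \<Rightarrow> 'a \<Rightarrow> 'a"
  thin :: "nat \<Rightarrow> 'a set"

definition simplicial_set :: "'a sset \<Rightarrow> bool" where
  "simplicial_set X \<longleftrightarrow>
     (\<forall>n m \<alpha> x. is_op m n \<alpha> \<and> x \<in> simp X n \<longrightarrow> act X n m \<alpha> x \<in> simp X m) \<and>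
     (\<forall>n x. x \<in> simp X n \<longrightarrow> act X n n (op_id n) x = x) \<and>
     (\<forall>n m k \<alpha> \<beta> x. is_op m n \<alpha> \<and> is_op k m \<beta> \<and> x \<in> simp X n \<longrightarrow>
        act X n k (op_comp k \<alpha> \<beta>) x = act X m k \<beta> (act X n m \<alpha> x))"

definition degenerate_at :: "'a sset \<Rightarrow> nat \<Rightarrow> nat \<Rightarrow> 'a \<Rightarrow> bool" where
  "degenerate_at X n k x \<longleftrightarrow> k < n \<and>
     (\<exists>x' \<in> simp X (n - 1). x = act X (n - 1) n (sigma (n - 1) k) x')"

definition degenerate :: "'a sset \<Rightarrow> nat \<Rightarrow> 'a \<Rightarrow> bool" where
  "degenerate X n x \<longleftrightarrow> (\<exists>k<n. degenerate_at X n k x)"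

definition stratified_set :: "'a sset \<Rightarrow> bool" where
  "stratified_set X \<longleftrightarrow> simplicial_set X \<and>
     (\<forall>n. thin X n \<subseteq> simp X n) \<and>
     (\<forall>n x. x \<in> simp X n \<and> degenerate X n x \<longrightarrow> x \<in> thin X n) \<and>
     thin X 0 = {}"

definition stratified_map :: "'a sset \<Rightarrow> 'b sset \<Rightarrow> (nat \<Rightarrow> 'a \<Rightarrow> 'b) \<Rightarrow> bool" where
  "stratified_map X Y f \<longleftrightarrow>
     (\<forall>n x. x \<in> simp X n \<longrightarrow> f n x \<in> simp Y n) \<and>
     (\<forall>n m \<alpha> x. is_op m n \<alpha> \<and> x \<in> simp X n \<longrightarrow>
        f m (act X n m \<alpha> x) = act Y n m \<alpha> (f n x)) \<and>
     (\<forall>n x. x \<in> thin X n \<longrightarrow> f n x \<in> thin Y n)"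

definition pre_degenerate_at :: "'a sset \<Rightarrow> nat \<Rightarrow> nat \<Rightarrow> 'a \<Rightarrow> bool" where
  "pre_degenerate_at X n k x \<longleftrightarrow> k < n \<and>
     (\<forall>m \<alpha>. is_op m n \<alpha> \<and> k \<in> \<alpha> ` {..m} \<and> Suc k \<in> \<alpha> ` {..m} \<longrightarrow>
        act X n m \<alpha> x \<in> thin X m)"

definition well_tempered :: "'a sset \<Rightarrow> bool" where
  "well_tempered X \<longleftrightarrow>
     (\<forall>n k x. x \<in> simp X n \<and> pre_degenerate_at X n k x \<longrightarrow> degenerate_at X n k x)"

definition Delta1t :: "(nat \<Rightarrow> nat) sset" where
  "Delta1t = \<lparr> simp = (\<lambda>n. {x. is_op n 1 x}),
               act = (\<lambda>n m \<alpha> x. op_comp m x \<alpha>),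
               thin = (\<lambda>n. if n > 0 then {x. is_op n 1 x} else {}) \<rparr>"

definition sprod :: "'a sset \<Rightarrow> 'b sset \<Rightarrow> ('a \<times> 'b) sset" where
  "sprod X Y = \<lparr> simp = (\<lambda>n. simp X n \<times> simp Y n),
                 act = (\<lambda>n m \<alpha> p. (act X n m \<alpha> (fst p), act Y n m \<alpha> (snd p))),
                 thin = (\<lambda>n. thin X n \<times> thin Y n) \<rparr>"

end

theory Submission
  imports Defs
begin

definition delta :: "nat \<Rightarrow> nat \<Rightarrow> (nat \<Rightarrow> nat)" where
  "delta n k = restrict (\<lambda>i. if i < k then i else Suc i) {..n}"

definition st :: "nat \<Rightarrow> nat \<Rightarrow> (nat \<Rightarrow> nat)" where
  "st n k = restrict (\<lambda>i. if i < k then 0 else 1) {..n}"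

lemma is_op_comp: "is_op m n \<alpha> \<Longrightarrow> is_op k m \<beta> \<Longrightarrow> is_op k n (op_comp k \<alpha> \<beta>)"
  unfolding is_op_def op_comp_def mono_on_def by (auto simp: PiE_def Pi_def)

lemma sigma_op: "k \<le> n \<Longrightarrow> is_op (Suc n) n (sigma n k)"
  unfolding is_op_def sigma_def mono_on_def by (auto simp: PiE_def Pi_def)

lemma delta_op: "is_op n (Suc n) (delta n k)"
  unfolding is_op_def delta_def mono_on_def by (auto simp: PiE_def Pi_def)

lemma st_op: "is_op n 1 (st n k)"
  unfolding is_op_def st_def mono_on_def by (auto simp: PiE_def Pi_def)

lemma sd1: "op_comp n (sigma n k) (delta n k) = op_id n"
  by (rule ext) (auto simp: op_comp_def sigma_def delta_def op_id_def)

lemma sd2: "op_comp n (sigma n k) (delta n (Suc k)) = op_id n"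
  by (rule ext) (auto simp: op_comp_def sigma_def delta_def op_id_def)

lemma std1: "op_comp n (st (Suc n) (Suc k)) (delta n k) = st n k"
  by (rule ext) (auto simp: op_comp_def st_def delta_def)

lemma std2: "op_comp n (st (Suc n) (Suc k)) (delta n (Suc k)) = st n (Suc k)"
  by (rule ext) (auto simp: op_comp_def st_def delta_def)

lemma st_all: assumes "is_op n 1 t" shows "\<exists>k\<le>Suc n. t = st n k"
proof (cases "\<exists>i\<le>n. t i = 1")
  case True
  define k where "k = (LEAST i. i \<le> n \<and> t i = 1)"
  have k1: "k \<le> n \<and> t k = 1" using True unfolding k_def by (metis (mono_tags, lifting) LeastI)
  have k2: "t i \<noteq> 1" if "i < k" for i
  proof
    assume "t i = 1"
    moreover have "i \<le> n" using k1 that by auto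
    ultimately have "k \<le> i" unfolding k_def by (auto intro: Least_le)
    then show False using that by auto
  qed
  have "t = st n k"
  proof
    fix i show "t i = st n k i"
    proof (cases "i \<le> n")
      case True
      have tl: "t i \<le> 1" using assms True unfolding is_op_def by (auto simp: PiE_def Pi_def)
      show ?thesis
      proof (cases "i < k")
        case True then show ?thesis using k2[OF True] tl \<open>i \<le> n\<close> by (auto simp: st_def)
      next
        case False
        have mo: "mono_on {..n} t" using assms unfolding is_op_def by auto
        have "t k \<le> t i" using k1 False True by (intro mono_onD[OF mo]) auto
        then show ?thesis using k1 tl False True by (auto simp: st_def)
      qed
    next
      case False then show ?thesis using assms unfolding is_op_def st_def by (auto simp: PiE_def extensional_def)
    qed
  qed
  then show ?thesis using k1 le_SucI by blast
next
  case False
  have "t = st n (Suc n)"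
  proof
    fix i show "t i = st n (Suc n) i"
      using assms False unfolding is_op_def st_def by (auto simp: PiE_def Pi_def extensional_def le_Suc_eq)
  qed
  then show ?thesis by auto
qed

locale sX =
  fixes X :: "'a sset"
  assumes ss: "stratified_set X"
begin

lemma act_simp: "is_op m n \<alpha> \<Longrightarrow> x \<in> simp X n \<Longrightarrow> act X n m \<alpha> x \<in> simp X m"
  using ss unfolding stratified_set_def simplicial_set_def by blast

lemma act_id: "x \<in> simp X n \<Longrightarrow> act X n n (op_id n) x = x"
  using ss unfolding stratified_set_def simplicial_set_def by blast

lemma act_comp: "is_op m n \<alpha> \<Longrightarrow> is_op k m \<beta> \<Longrightarrow> x \<in> simp X n \<Longrightarrow>
   act X n k (op_comp k \<alpha> \<beta>) x = act X m k \<beta> (act X n m \<alpha> x)"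
  using ss unfolding stratified_set_def simplicial_set_def by blast

lemma degen_thin: "x \<in> simp X n \<Longrightarrow> degenerate_at X n k x \<Longrightarrow> x \<in> thin X n"
proof -
  assume a: "x \<in> simp X n" "degenerate_at X n k x"
  then have "k < n" unfolding degenerate_at_def by blast
  then show ?thesis using a ss unfolding stratified_set_def degenerate_def by blast
qed

lemma thin_simp: "x \<in> thin X n \<Longrightarrow> x \<in> simp X n"
  using ss unfolding stratified_set_def by blast

lemma thin0: "x \<in> thin X n \<Longrightarrow> n > 0"
  using ss unfolding stratified_set_def by (cases n) auto

lemma noninj_thin:
  assumes op: "is_op m n \<beta>" and j: "j < m" and eq: "\<beta> j = \<beta> (Suc j)" and x: "x \<in> simp X n"
  shows "act X n m \<beta> x \<in> thin X m"
proof -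
  obtain m' where m: "m = Suc m'" using j by (cases m) auto
  define \<beta>' where "\<beta>' = op_comp m' \<beta> (delta m' (Suc j))"
  have op': "is_op m' n \<beta>'" unfolding \<beta>'_def using is_op_comp[OF op[unfolded m] delta_op] .
  have jm: "j \<le> m'" using j m by auto
  have "op_comp m \<beta>' (sigma m' j) = \<beta>"
  proof
    fix i show "op_comp m \<beta>' (sigma m' j) i = \<beta> i"
    proof (cases "i \<le> m")
      case True
      consider "i \<le> j" | "i = Suc j" | "Suc j < i" by linarith
      then show ?thesis
      proof cases
        case 1 then show ?thesis using True m jm by (auto simp: \<beta>'_def op_comp_def sigma_def delta_def)
      next
        case 2 then show ?thesis using True m jm eq by (auto simp: \<beta>'_def op_comp_def sigma_def delta_def)
      next
        case 3
        then have "sigma m' j i = i - 1" "i - 1 \<le> m'" using True m by (auto simp: sigma_def)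
        moreover have "delta m' (Suc j) (i - 1) = i" using 3 \<open>i - 1 \<le> m'\<close> by (auto simp: delta_def)
        ultimately show ?thesis using True by (auto simp: \<beta>'_def op_comp_def)
      qed
    next
      case False then show ?thesis using op unfolding is_op_def op_comp_def by (auto simp: PiE_def extensional_def)
    qed
  qed
  then have "act X n m \<beta> x = act X m' m (sigma m' j) (act X n m' \<beta>' x)"
    using act_comp[OF op' sigma_op[OF jm] x] m by simp
  then have "degenerate_at X m j (act X n m \<beta> x)"
    unfolding degenerate_at_def using j m act_simp[OF op' x] by auto
  then show ?thesis using degen_thin act_simp[OF op x] by blast
qed

end


theorem mainTheorem11:
  fixes X :: "'a sset" and Y :: "'b sset"
    and h :: "nat \<Rightarrow> 'a \<times> (nat \<Rightarrow> nat) \<Rightarrow> 'b"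
  assumes "stratified_set Y" and "well_tempered Y"
    and "stratified_set X"
    and "stratified_map (sprod X Delta1t) Y h"
  shows "\<exists>hh. stratified_map X Y hh \<and>
           (\<forall>n p. p \<in> simp (sprod X Delta1t) n \<longrightarrow> h n p = hh n (fst p))"
proof -
  interpret X: sX X by unfold_locales (rule assms(3))
  interpret Y: sX Y by unfold_locales (rule assms(1))
  have hs: "\<And>n p. p \<in> simp (sprod X Delta1t) n \<Longrightarrow> h n p \<in> simp Y n"
   and hact: "\<And>n m \<alpha> p. is_op m n \<alpha> \<Longrightarrow> p \<in> simp (sprod X Delta1t) n \<Longrightarrow>
        h m (act (sprod X Delta1t) n m \<alpha> p) = act Y n m \<alpha> (h n p)"
   and hthin: "\<And>n p. p \<in> thin (sprod X Delta1t) n \<Longrightarrow> h n p \<in> thin Y n"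
    using assms(4) unfolding stratified_map_def by blast+
  have sp: "simp (sprod X Delta1t) n = simp X n \<times> {t. is_op n 1 t}" for n
    by (simp add: sprod_def Delta1t_def)
  have ap: "act (sprod X Delta1t) n m \<alpha> p = (act X n m \<alpha> (fst p), op_comp m (snd p) \<alpha>)" for n m \<alpha> p
    by (simp add: sprod_def Delta1t_def)
  have tp: "thin (sprod X Delta1t) n = thin X n \<times> (if n > 0 then {t. is_op n 1 t} else {})" for n
    by (simp add: sprod_def Delta1t_def)
  have step: "h n (x, st n k) = h n (x, st n (Suc k))" if x: "x \<in> simp X n" and k: "k \<le> n" for n k x
  proof -
    define xs where "xs = act X n (Suc n) (sigma n k) x"
    define \<tau> where "\<tau> = st (Suc n) (Suc k)"
    have sig: "is_op (Suc n) n (sigma n k)" using sigma_op k .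
    have xs: "xs \<in> simp X (Suc n)" unfolding xs_def using X.act_simp[OF sig x] .
    have P: "(xs, \<tau>) \<in> simp (sprod X Delta1t) (Suc n)" using xs st_op unfolding sp \<tau>_def by auto
    have pd: "pre_degenerate_at Y (Suc n) k (h (Suc n) (xs, \<tau>))"
      unfolding pre_degenerate_at_def
    proof (intro conjI allI impI)
      show "k < Suc n" using k by simp
      fix m \<alpha> assume a: "is_op m (Suc n) \<alpha> \<and> k \<in> \<alpha> ` {..m} \<and> Suc k \<in> \<alpha> ` {..m}"
      then obtain a b where ab: "a \<le> m" "b \<le> m" "\<alpha> a = k" "\<alpha> b = Suc k" by auto
      have mo: "mono_on {..m} \<alpha>" using a is_op_def by auto
      have "a < b"
      proof (rule ccontr)
        assume "\<not> a < b"
        then have "\<alpha> b \<le> \<alpha> a" using mono_onD[OF mo, of b a] ab by auto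
        then show False using ab by simp
      qed
      define J where "J = {i. i < b \<and> \<alpha> i \<le> k}"
      have fin: "finite J" unfolding J_def by auto
      have aJ: "a \<in> J" using ab \<open>a<b\<close> unfolding J_def by auto
      define j where "j = Max J"
      have jJ: "j \<in> J" unfolding j_def using fin aJ Max_in by blast
      have aj: "a \<le> j" unfolding j_def using fin aJ by simp
      have sjb: "Suc j \<le> b" using jJ J_def by auto
      have "\<alpha> (Suc j) > k"
      proof (cases "Suc j = b")
        case True then show ?thesis using ab by simp
      next
        case False then have "Suc j < b" using sjb by simp
        moreover have "Suc j \<notin> J" using Max_ge[OF fin] j_def by fastforce
        ultimately show ?thesis unfolding J_def by auto
      qed
      moreover have "\<alpha> (Suc j) \<le> Suc k" using mono_onD[OF mo, of "Suc j" b] sjb ab by auto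
      moreover have "\<alpha> j \<ge> k" using mono_onD[OF mo, of a j] aj ab sjb by auto
      moreover have "\<alpha> j \<le> k" using jJ J_def by auto
      ultimately have aj1: "\<alpha> j = k" and aj2: "\<alpha> (Suc j) = Suc k" by auto
      have jm: "j < m" using sjb ab by simp
      let ?\<beta> = "op_comp m (sigma n k) \<alpha>"
      have bop: "is_op m n ?\<beta>" using is_op_comp[OF sig] a by blast
      have "?\<beta> j = ?\<beta> (Suc j)" using aj1 aj2 jm k by (simp add: op_comp_def sigma_def)
      then have th1: "act X n m ?\<beta> x \<in> thin X m" using X.noninj_thin[OF bop jm _ x] by blast
      have eq1: "act X (Suc n) m \<alpha> xs = act X n m ?\<beta> x"
        unfolding xs_def using X.act_comp[OF sig _ x] a by simp
      have th2: "op_comp m \<tau> \<alpha> \<in> {t. is_op m 1 t}" using is_op_comp[OF st_op] a \<tau>_def by blast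
      have "act (sprod X Delta1t) (Suc n) m \<alpha> (xs, \<tau>) \<in> thin (sprod X Delta1t) m"
        unfolding ap tp using th1 th2 eq1 jm by auto
      then have "h m (act (sprod X Delta1t) (Suc n) m \<alpha> (xs, \<tau>)) \<in> thin Y m" by (rule hthin)
      then show "act Y (Suc n) m \<alpha> (h (Suc n) (xs, \<tau>)) \<in> thin Y m" using hact a P by simp
    qed
    have hP: "h (Suc n) (xs,\<tau>) \<in> simp Y (Suc n)" using hs P .
    then have "degenerate_at Y (Suc n) k (h (Suc n) (xs, \<tau>))"
      using assms(2) pd unfolding well_tempered_def by blast
    then obtain y where y: "y \<in> simp Y n" "h (Suc n) (xs,\<tau>) = act Y n (Suc n) (sigma n k) y"
      unfolding degenerate_at_def by auto
    have face: "h n (x, st n k') = y" if "k' = k \<or> k' = Suc k" for k'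
    proof -
      have dop: "is_op n (Suc n) (delta n k')" by (rule delta_op)
      have c1: "op_comp n (sigma n k) (delta n k') = op_id n" using that sd1 sd2 by auto
      have c2: "op_comp n \<tau> (delta n k') = st n k'" using that std1 std2 \<tau>_def by auto
      have "act (sprod X Delta1t) (Suc n) n (delta n k') (xs, \<tau>) = (x, st n k')"
        unfolding ap using c1 c2 X.act_comp[OF sig dop x] X.act_id[OF x] xs_def by simp
      then have "h n (x, st n k') = act Y (Suc n) n (delta n k') (h (Suc n) (xs,\<tau>))"
        using hact[OF dop P] by simp
      also have "\<dots> = act Y n n (op_comp n (sigma n k) (delta n k')) y"
        using y Y.act_comp[OF sig dop y(1)] by simp
      also have "\<dots> = y" using c1 Y.act_id[OF y(1)] by simp
      finally show ?thesis .
    qed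
    show ?thesis using face by auto
  qed
  have chain: "h n (x, st n k) = h n (x, st n (Suc n))"
    if x: "x \<in> simp X n" and kk: "k \<le> Suc n" for n k x
    using kk
  proof (induction "Suc n - k" arbitrary: k)
    case 0 then have "k = Suc n" by simp
    then show ?case by simp
  next
    case (Suc d)
    then have "k \<le> n" "d = Suc n - Suc k" "Suc k \<le> Suc n" by auto
    then show ?case using Suc.hyps(1) step[OF x] by metis
  qed
  define hh where "hh n x = h n (x, st n (Suc n))" for n x
  have key: "h n p = hh n (fst p)" if p: "p \<in> simp (sprod X Delta1t) n" for n p
  proof -
    obtain x t where xt: "p = (x, t)" "x \<in> simp X n" "is_op n 1 t" using p sp by (cases p) auto
    obtain k where k: "k \<le> Suc n" "t = st n k" using st_all[OF xt(3)] by blast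
    have "h n p = h n (x, st n (Suc n))" using chain[OF xt(2) k(1)] xt(1) k(2) by simp
    then show ?thesis using xt(1) unfolding hh_def by simp
  qed
  have c0: "op_comp m (st n (Suc n)) \<alpha> = st m (Suc m)" if "is_op m n \<alpha>" for m n \<alpha>
  proof
    fix i show "op_comp m (st n (Suc n)) \<alpha> i = st m (Suc m) i"
      using that unfolding op_comp_def st_def is_op_def by (auto simp: PiE_def Pi_def)
  qed
  have sm: "stratified_map X Y hh"
    unfolding stratified_map_def
  proof (intro conjI allI impI)
    fix n x assume "x \<in> simp X n"
    then show "hh n x \<in> simp Y n" unfolding hh_def using hs sp st_op by auto
  next
    fix n m \<alpha> x assume a: "is_op m n \<alpha> \<and> x \<in> simp X n"
    have P: "(x, st n (Suc n)) \<in> simp (sprod X Delta1t) n" using a sp st_op by auto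
    have "act (sprod X Delta1t) n m \<alpha> (x, st n (Suc n)) = (act X n m \<alpha> x, st m (Suc m))"
      unfolding ap using c0 a by simp
    then show "hh m (act X n m \<alpha> x) = act Y n m \<alpha> (hh n x)"
      unfolding hh_def using hact[OF _ P] a by metis
  next
    fix n x assume a: "x \<in> thin X n"
    then have "(x, st n (Suc n)) \<in> thin (sprod X Delta1t) n" unfolding tp using X.thin0 st_op by auto
    then show "hh n x \<in> thin Y n" unfolding hh_def by (rule hthin)
  qed
  show ?thesis using sm key by blast
qed

end
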